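(* Let $n\ge2$, $0<s\le 1/(25n^2)$, $b_1,\dots,b_{n-1}\in\mathbb{C}$ with $|b_i|=s^i$, and let $P_n$ be as defined below. For $1\le i\le n-1$ and $1\le j\le 2n+2$ let $\widetilde w_{i,j}=b_i\exp\!\big(\pi\mathrm{i}\tfrac{2j-1}{2n+2}\big)$. Then there is a critical point $w_{i,j}\in\mathbb{C}\setminus\{0\}$ of $P_n$ (a solution of $zP_n'(z)/(P_n(z)-B_n)=0$) with $|w_{i,j}-\widetilde w_{i,j}|<s^{n+1/2}|b_i|$, and $w_{i_1,j_1}=w_{i_2,j_2}$ if and only if $(i_1,j_1)=(i_2,j_2)$.
   Context: $C_n=\sum_{i=1}^{n-1}\frac{(-1)^{i-1}b_i^{2n+2}}{1-b_i^{2n+2}}$, $A_n=\frac{1}{1+(2n+2)C_n}\prod_{i=1}^{n-1}(1-b_i^{2n+2})^{(-1)^i}$, $B_n=\frac{(2n+2)C_n}{1+(2n+2)C_n}$, and $$P_n(z)=A_n\,\frac{(n+1)z^{(-1)^{n+1}(n+1)}}{nz^{n+1}+1}\prod_{i=1}^{n-1}\big(z^{2n+2}-b_i^{2n+2}\big)^{(-1)^{i-1}}+B_n.$$ *)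

theory Defs
  imports "HOL-Analysis.Analysis"
begin

definition C_n :: "nat \<Rightarrow> (nat \<Rightarrow> complex) \<Rightarrow> complex" where
  "C_n n b = (\<Sum>i=1..n-1. (-1)^(i-1) * b i ^ (2*n+2) / (1 - b i ^ (2*n+2)))"

definition A_n :: "nat \<Rightarrow> (nat \<Rightarrow> complex) \<Rightarrow> complex" where
  "A_n n b = 1 / (1 + of_nat (2*n+2) * C_n n b) *
     (\<Prod>i=1..n-1. (1 - b i ^ (2*n+2)) powi ((-1)^i))"

definition B_n :: "nat \<Rightarrow> (nat \<Rightarrow> complex) \<Rightarrow> complex" where
  "B_n n b = of_nat (2*n+2) * C_n n b / (1 + of_nat (2*n+2) * C_n n b)"

definition P_n :: "nat \<Rightarrow> (nat \<Rightarrow> complex) \<Rightarrow> complex \<Rightarrow> complex" where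
  "P_n n b z = A_n n b * (of_nat (n+1) * z powi ((-1)^(n+1) * int (n+1)) / (of_nat n * z^(n+1) + 1))
      * (\<Prod>i=1..n-1. (z^(2*n+2) - b i ^ (2*n+2)) powi ((-1)^(i-1))) + B_n n b"

text \<open>z is a point where P_n is defined (nonzero, not a pole) and P_n z differs from B_n,
  so z P_n'(z)/(P_n(z) - B_n) is a well-defined quantity; it is a critical point when this
  quantity vanishes, i.e. when the derivative of P_n at z is zero.\<close>
definition is_crit_P :: "nat \<Rightarrow> (nat \<Rightarrow> complex) \<Rightarrow> complex \<Rightarrow> bool" where
  "is_crit_P n b z \<longleftrightarrow> z \<noteq> 0 \<and> of_nat n * z^(n+1) + 1 \<noteq> 0 \<and>
     (\<forall>i\<in>{1..n-1}. z^(2*n+2) \<noteq> b i ^ (2*n+2)) \<and> P_n n b z \<noteq> B_n n b \<and>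
     (P_n n b has_field_derivative 0) (at z)"

end

theory Submission
  imports Defs "HOL-Analysis.Analysis"
begin


lemma ld_mult:
  assumes "(f has_field_derivative f x * L1) (at x)" "(g has_field_derivative g x * L2) (at x)"
  shows "((\<lambda>y. f y * g y) has_field_derivative (f x * g x) * (L1 + L2)) (at x)"
  using DERIV_mult[OF assms] by (simp add: algebra_simps)

lemma ld_div:
  assumes "(f has_field_derivative f x * L1) (at x)" "(g has_field_derivative g x * L2) (at x)"
    "g x \<noteq> (0::complex)"
  shows "((\<lambda>y. f y / g y) has_field_derivative (f x / g x) * (L1 - L2)) (at x)"
proof -
  have "((\<lambda>y. f y / g y) has_field_derivative (f x * L1 * g x - f x * (g x * L2)) / (g x * g x)) (at x)"
    using DERIV_divide[OF assms] .
  moreover have "(f x * L1 * g x - f x * (g x * L2)) / (g x * g x) = (f x / g x) * (L1 - L2)"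
    using assms(3) by (simp add: field_simps)
  ultimately show ?thesis by simp
qed

lemma ld_prod:
  fixes f :: "nat \<Rightarrow> complex \<Rightarrow> complex"
  assumes "finite S" "\<And>k. k \<in> S \<Longrightarrow> (f k has_field_derivative f k x * L k) (at x)"
  shows "((\<lambda>y. \<Prod>k\<in>S. f k y) has_field_derivative (\<Prod>k\<in>S. f k x) * (\<Sum>k\<in>S. L k)) (at x)"
  using assms
proof (induction S rule: finite_induct)
  case empty
  then show ?case by simp
next
  case (insert a F)
  have "((\<lambda>y. f a y * (\<Prod>k\<in>F. f k y)) has_field_derivative (f a x * (\<Prod>k\<in>F. f k x)) * (L a + (\<Sum>k\<in>F. L k))) (at x)"
    by (rule ld_mult) (use insert in auto)
  then show ?case using insert by simp
qed

lemma ld_const: "((\<lambda>y. c) has_field_derivative c * 0) (at x)"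
  by simp

lemma ld_powi:
  assumes "(x::complex) \<noteq> 0"
  shows "((\<lambda>y. y powi e) has_field_derivative (x powi e) * (of_int e / x)) (at x)"
proof -
  have "((\<lambda>y. y powi e) has_field_derivative (of_int e * x powi (e - 1) * 1)) (at x)"
    by (rule DERIV_power_int) (use assms in auto)
  moreover have "of_int e * x powi (e - 1) * 1 = (x powi e) * (of_int e / x)"
    using assms by (simp add: power_int_diff field_simps)
  ultimately show ?thesis by simp
qed

lemma ld_fac:
  assumes "(x::complex)^N \<noteq> c"
  shows "((\<lambda>y. (y^N - c) powi e) has_field_derivative ((x^N - c) powi e) * (of_int e * of_nat N * x^(N-1) / (x^N - c))) (at x)"
proof -
  have "((\<lambda>y. (y^N - c) powi e) has_field_derivative (of_int e * (x^N - c) powi (e - 1) * (of_nat N * x^(N-1)))) (at x)"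
    by (rule DERIV_power_int) (use assms in \<open>auto intro!: derivative_eq_intros\<close>)
  moreover have "of_int e * (x^N - c) powi (e - 1) * (of_nat N * x^(N-1)) = ((x^N - c) powi e) * (of_int e * of_nat N * x^(N-1) / (x^N - c))"
    using assms by (simp add: power_int_diff field_simps)
  ultimately show ?thesis by simp
qed

lemma ld_den:
  assumes "of_nat n * (x::complex)^(n+1) + 1 \<noteq> 0"
  shows "((\<lambda>y. of_nat n * y^(n+1) + 1) has_field_derivative (of_nat n * x^(n+1) + 1) * (of_nat n * of_nat (n+1) * x^n / (of_nat n * x^(n+1) + 1))) (at x)"
proof -
  have "((\<lambda>y. of_nat n * y^(n+1) + 1) has_field_derivative (of_nat n * (of_nat (n+1) * x^n))) (at x)"
  proof -
    have "((\<lambda>y. y^(n+1)) has_field_derivative of_nat (n+1) * x^n) (at x)"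
      by (rule DERIV_cong[OF DERIV_power[OF DERIV_ident]]) simp
    from DERIV_add[OF DERIV_cmult[OF this, of "of_nat n"] DERIV_const[of 1]] show ?thesis by simp
  qed
  then show ?thesis apply (rule DERIV_cong) using assms by simp
qed

definition lam :: "nat \<Rightarrow> (nat \<Rightarrow> complex) \<Rightarrow> complex \<Rightarrow> complex" where
  "lam n b z = (-1)^(n+1) * of_nat (n+1) - of_nat n * of_nat (n+1) * z^(n+1) / (of_nat n * z^(n+1) + 1)
     + (\<Sum>k=1..n-1. (-1)^(k-1) * of_nat (2*n+2) * z^(2*n+2) / (z^(2*n+2) - b k ^ (2*n+2)))"

lemma P_deriv:
  assumes z: "z \<noteq> 0" "of_nat n * z^(n+1) + 1 \<noteq> 0" "\<forall>k\<in>{1..n-1}. z^(2*n+2) \<noteq> b k ^ (2*n+2)"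
  shows "(P_n n b has_field_derivative (P_n n b z - B_n n b) * (lam n b z / z)) (at z)"
proof -
  define N where "N = 2*n+2"
  define e :: int where "e = (-1)^(n+1) * int (n+1)"
  let ?L = "0 + ((0 + of_int e / z) - of_nat n * of_nat (n+1) * z^n / (of_nat n * z^(n+1) + 1))
     + (\<Sum>k=1..n-1. of_int ((-1)^(k-1)) * of_nat N * z^(N-1) / (z^N - b k ^ N))"
  have "((\<lambda>y. A_n n b * (of_nat (n+1) * y powi e / (of_nat n * y^(n+1) + 1))
      * (\<Prod>i=1..n-1. (y^N - b i ^ N) powi ((-1)^(i-1)))) has_field_derivative
     (A_n n b * (of_nat (n+1) * z powi e / (of_nat n * z^(n+1) + 1))
      * (\<Prod>i=1..n-1. (z^N - b i ^ N) powi ((-1)^(i-1)))) * ?L) (at z)"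
    apply (rule ld_mult)
     apply (rule ld_mult[OF ld_const])
     apply (rule ld_div)
       apply (rule ld_mult[OF ld_const ld_powi[OF z(1)]])
      apply (rule ld_den[OF z(2)])
     apply (rule z(2))
    apply (rule ld_prod)
     apply simp
    apply (rule ld_fac)
    using z(3) unfolding N_def by auto
  then have "((\<lambda>y. P_n n b y - B_n n b) has_field_derivative (P_n n b z - B_n n b) * ?L) (at z)"
    unfolding P_n_def N_def e_def by simp
  then have d: "(P_n n b has_field_derivative (P_n n b z - B_n n b) * ?L) (at z)"
    using DERIV_add[of "(\<lambda>y. P_n n b y - B_n n b)" _ z UNIV "\<lambda>_. B_n n b" 0] by simp
  have h: "?L * z = lam n b z"
  proof -
    have s: "(\<Sum>k=1..n-1. of_int ((-1)^(k-1)) * of_nat N * z^(N-1) / (z^N - b k ^ N)) * z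
      = (\<Sum>k=1..n-1. (-1)^(k-1) * of_nat (2*n+2) * z^(2*n+2) / (z^(2*n+2) - b k ^ (2*n+2)))"
      unfolding sum_distrib_right
    proof (rule sum.cong)
      fix k assume "k \<in> {1..n-1}"
      have "z^(N-1) * z = z^N" unfolding N_def by (simp add: mult.commute)
      then show "of_int ((-1)^(k-1)) * of_nat N * z^(N-1) / (z^N - b k ^ N) * z
         = (-1)^(k-1) * of_nat (2*n+2) * z^(2*n+2) / (z^(2*n+2) - b k ^ (2*n+2))"
        unfolding N_def by (simp add: field_simps)
    qed simp
    have zz: "z^n * z = z^(n+1)" by simp
    define T where "T = (\<Sum>k=1..n-1. of_int ((-1)^(k-1)) * of_nat N * z^(N-1) / (z^N - b k ^ N))"
    define den where "den = of_nat n * z^(n+1) + (1::complex)"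
    have "?L * z = of_int e - of_nat n * of_nat (n+1) * (z^n * z) / den + T * z"
      unfolding T_def[symmetric] den_def[symmetric] using z(1) z(2)[folded den_def] by (simp add: field_simps)
    also have "... = lam n b z" unfolding lam_def zz s[folded T_def] den_def e_def by simp
    finally show ?thesis .
  qed
  have gen: "\<And>x y. x * z = y \<Longrightarrow> x = y / z" using z(1) by (simp add: eq_divide_eq)
  have "?L = lam n b z / z" by (rule gen[OF h])
  then show ?thesis using d by simp
qed




lemma pow_bern: "0 \<le> (x::real) \<Longrightarrow> real m * x \<le> 1/2 \<Longrightarrow> (1+x)^m \<le> 1 + 2 * real m * x"
proof (induction m)
  case 0 then show ?case by simp
next
  case (Suc m)
  have h: "real m * x \<le> 1/2" using Suc.prems mult_right_mono[of "real m" "real (Suc m)" x] by simp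
  have "(1+x)^Suc m = (1+x)^m * (1+x)" by simp
  also have "... \<le> (1 + 2 * real m * x) * (1+x)"
    using Suc.IH[OF Suc.prems(1) h] Suc.prems(1) by (intro mult_right_mono) auto
  also have "... = 1 + (2*real m + 1) * x + 2 * (real m * x) * x" by (simp add: algebra_simps)
  also have "... \<le> 1 + (2*real m + 1) * x + x"
    using h Suc.prems(1) mult_right_mono[OF h, of x] by simp
  finally show ?case by (simp add: algebra_simps)
qed

lemma ratio_bound:
  fixes x y :: complex
  assumes "norm x \<le> t * norm y" "t \<le> 1/2" "0 \<le> t"
  shows "norm (x / (y - x)) \<le> 2 * t"
proof (cases "y = 0")
  case True
  then have "norm x \<le> 0" using assms by simp
  then show ?thesis using True assms(3) by simp
next
  case False
  have t0: "0 \<le> t" using assms(3) .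
  have "norm (y - x) \<ge> norm y - norm x" by (rule norm_triangle_ineq2)
  moreover have "t * norm y \<le> 1/2 * norm y" using assms(2) by (rule mult_right_mono) auto
  ultimately have yx: "norm (y - x) \<ge> norm y / 2" using assms by linarith
  have ny: "norm y > 0" using False by simp
  have "norm (x / (y - x)) = norm x / norm (y - x)" by (simp add: norm_divide)
  also have "... \<le> (t * norm y) / (norm y / 2)"
    using yx ny assms(1) t0 by (intro frac_le) auto
  also have "... = 2 * t" using ny by simp
  finally show ?thesis .
qed

lemma sign_sum_int:
  assumes "n \<ge> 1" "m \<le> n - 1"
  shows "(-1::int)^(n-1-m) * ((-1)^(n+1) + 2 * (\<Sum>k=n-m..n-1. (-1)^(k-1))) = 1"
  using assms(2)
proof (induction m)
  case 0
  have "(-1::int)^(n-1) * (-1)^(n+1) = (-1)^(n-1+(n+1))" by (simp add: power_add)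
  also have "n-1+(n+1) = 2*n" using assms(1) by simp
  finally show ?case using assms(1) by simp
next
  case (Suc m)
  define i' where "i' = n - 1 - m"
  have i1: "i' \<ge> 1" using Suc.prems unfolding i'_def by simp
  have e1: "n - Suc m = i'" unfolding i'_def using Suc.prems by simp
  have e2: "n - 1 - Suc m = i' - 1" unfolding i'_def using Suc.prems by simp
  have e3: "n - m = i' + 1" unfolding i'_def using Suc.prems by simp
  have IH: "(-1::int)^i' * ((-1)^(n+1) + 2 * (\<Sum>k=i'+1..n-1. (-1)^(k-1))) = 1"
    using Suc.IH Suc.prems unfolding i'_def e3[unfolded i'_def] by simp
  have set: "{i'..n-1} = insert i' {i'+1..n-1}" using Suc.prems unfolding i'_def by auto
  have "(\<Sum>k=i'..n-1. (-1::int)^(k-1)) = (-1)^(i'-1) + (\<Sum>k=i'+1..n-1. (-1)^(k-1))"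
    unfolding set by simp
  moreover have "(-1::int)^i' = - ((-1)^(i'-1))" using i1
    by (metis Suc_diff_1 less_le_trans mult_minus1 power_Suc zero_less_one)
  moreover have "(-1::int)^(i'-1) * (-1)^(i'-1) = 1"
    by (simp add: power_add[symmetric])
  ultimately show ?case using IH unfolding e1 e2
    by (simp add: algebra_simps)
qed

lemma sign_sum:
  assumes "1 \<le> i" "i \<le> n - 1"
  shows "(-1::complex)^i * ((-1)^(n+1) * of_nat (n+1) + (\<Sum>k=i+1..n-1. (-1)^(k-1) * of_nat (2*n+2)))
     = of_nat (n+1)"
proof -
  define m where "m = n - 1 - i"
  have i: "i = n - 1 - m" "i + 1 = n - m" "m \<le> n - 1" using assms unfolding m_def by auto
  have h: "(-1::int)^i * ((-1)^(n+1) + 2 * (\<Sum>k=i+1..n-1. (-1)^(k-1))) = 1"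
    using sign_sum_int[of n m] assms i by simp
  have "of_int ((-1::int)^i * ((-1)^(n+1) + 2 * (\<Sum>k=i+1..n-1. (-1)^(k-1))) * int (n+1)) = (of_nat (n+1) :: complex)"
    using h by simp
  moreover have "(\<Sum>k=i+1..n-1. (-1::complex)^(k-1) * of_nat (2*n+2)) = (\<Sum>k=i+1..n-1. (-1)^(k-1)) * 2 * of_nat (n+1)"
    unfolding sum_distrib_right by (rule sum.cong) (simp_all add: algebra_simps)
  ultimately show ?thesis by (simp add: algebra_simps)
qed

locale LL =
  fixes n :: nat and s :: real and b :: "nat \<Rightarrow> complex"
  assumes n2: "n \<ge> 2" and s0: "0 < s" and s1: "s \<le> 1 / (25 * real n ^ 2)"
    and nb: "\<forall>i\<in>{1..n-1}. norm (b i) = s ^ i"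
begin

lemma s_small: "s \<le> 1/100"
proof -
  have "real n ^ 2 \<ge> 4" using power_mono[of 2 "real n" 2] n2 by simp
  then have "1 / (25 * real n ^ 2) \<le> 1/(25*4)" using n2 by (intro divide_left_mono) auto
  then show ?thesis using s1 by linarith
qed

lemma ns_small: "real n * s \<le> 1/50"
proof -
  have np: "real n \<ge> 2" using n2 by simp
  have "real n * s \<le> real n * (1 / (25 * real n ^ 2))" using s1 np by (intro mult_left_mono) auto
  also have "... = 1 / (25 * real n)" using np by (simp add: power2_eq_square)
  also have "... \<le> 1/50" using np by (simp add: field_simps)
  finally show ?thesis .
qed

lemma sig_le: "s^(n+1) \<le> s^3"
  using s0 s_small n2 by (intro power_decreasing) auto

lemma sig_pos: "s^(n+1) > 0" using s0 by simp

lemma nsig: "real n * s^(n+1) \<le> 1/500000"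
proof -
  have "s^(n+1) = s * s^n" by simp
  have "s^n \<le> s^2" using s0 s_small n2 by (intro power_decreasing) auto
  also have "s^2 \<le> (1/100)^2" using s0 s_small by (intro power_mono) auto
  finally have a0: "s^n \<le> (1/100)^2" .
  have "(1/100::real)^2 = 1/10000" by (simp add: power2_eq_square)
  then have a: "s^n \<le> 1/10000" using a0 by linarith
  have "real n * s^(n+1) = (real n * s) * s^n" by simp
  also have "... \<le> (1/50) * (1/10000)"
    using ns_small a s0 by (intro mult_mono) auto
  finally show ?thesis by simp
qed

end



context LL begin

definition At :: "complex \<Rightarrow> complex" where
  "At z = of_nat n * of_nat (n+1) * z^(n+1) / (of_nat n * z^(n+1) + 1)"
definition tk :: "nat \<Rightarrow> complex \<Rightarrow> complex" where
  "tk k z = (-1)^(k-1) * of_nat (2*n+2) * z^(2*n+2) / (z^(2*n+2) - b k ^ (2*n+2))"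
definition gf :: "nat \<Rightarrow> complex \<Rightarrow> complex" where
  "gf i z = (-1)^(n+1) * of_nat (n+1) - At z + (\<Sum>k\<in>{1..n-1}-{i}. tk k z)"
definition Ef :: "nat \<Rightarrow> complex \<Rightarrow> complex" where
  "Ef i z = (-1)^i * gf i z / of_nat (2*n+2)"
definition rk :: "nat \<Rightarrow> nat \<Rightarrow> complex \<Rightarrow> complex" where
  "rk i k z = (if k < i then tk k z else tk k z - (-1)^(k-1) * of_nat (2*n+2))"

lemma lam_split: "i \<in> {1..n-1} \<Longrightarrow> lam n b z = gf i z + tk i z"
proof -
  assume i: "i \<in> {1..n-1}"
  have l: "lam n b z = (-1)^(n+1) * of_nat (n+1) - At z + (\<Sum>k=1..n-1. tk k z)"
    unfolding lam_def At_def tk_def by (rule refl)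
  have "(\<Sum>k=1..n-1. tk k z) = tk i z + (\<Sum>k\<in>{1..n-1}-{i}. tk k z)"
    by (rule sum.remove) (use i in auto)
  then show ?thesis unfolding l gf_def by simp
qed

lemma E_decomp:
  assumes "i \<in> {1..n-1}"
  shows "Ef i z - 1/2 = (-1)^i * (- At z + (\<Sum>k\<in>{1..n-1}-{i}. rk i k z)) / of_nat (2*n+2)"
proof -
  define K where "K = {1..n-1}-{i}"
  define f where "f k = (-1::complex)^(k-1) * of_nat (2*n+2)" for k
  have fin: "finite K" unfolding K_def by simp
  have "(\<Sum>k\<in>K. tk k z) = (\<Sum>k\<in>K. rk i k z) + (\<Sum>k\<in>K. if \<not> k < i then f k else 0)"
    unfolding sum.distrib[symmetric] rk_def f_def by (rule sum.cong) auto
  also have "(\<Sum>k\<in>K. if \<not> k < i then f k else 0) = (\<Sum>k\<in>{k\<in>K. \<not> k < i}. f k)"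
    using sum.inter_filter[OF fin, of f "\<lambda>k. \<not> k < i"] by simp
  also have "{k\<in>K. \<not> k < i} = {i+1..n-1}" unfolding K_def by auto
  finally have s: "(\<Sum>k\<in>K. tk k z) = (\<Sum>k\<in>K. rk i k z) + (\<Sum>k=i+1..n-1. f k)" .
  have c: "(-1::complex)^i * ((-1)^(n+1) * of_nat (n+1) + (\<Sum>k=i+1..n-1. f k)) = of_nat (n+1)"
    unfolding f_def using sign_sum assms by auto
  have N: "(of_nat (2*n+2) :: complex) = 2 * of_nat (n+1)" by simp
  have "Ef i z = ((-1)^i * ((-1)^(n+1) * of_nat (n+1) + (\<Sum>k=i+1..n-1. f k))
      + (-1)^i * (- At z + (\<Sum>k\<in>K. rk i k z))) / of_nat (2*n+2)"
    unfolding Ef_def gf_def K_def[symmetric] s by (simp add: algebra_simps)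
  also have "... = 1/2 + (-1)^i * (- At z + (\<Sum>k\<in>K. rk i k z)) / of_nat (2*n+2)"
  proof -
    have h: "of_nat (n+1) / (2 * of_nat (n+1)) = (1/2::complex)"
      by (simp del: of_nat_Suc)
    show ?thesis unfolding c add_divide_distrib N h ..
  qed
  finally show ?thesis unfolding K_def by simp
qed

end



context LL begin

lemma sig_small: "s^(n+1) \<le> 1/1000000"
proof -
  have "2 * s^(n+1) \<le> real n * s^(n+1)" using n2 sig_pos
    by (intro mult_right_mono) auto
  then show ?thesis using nsig by linarith
qed

lemma t_bound: "(2 * s)^(2*n+2) \<le> s^(n+1) / 25"
proof -
  have "(2 * s)^(2*n+2) = ((2 * s)^2)^(n+1)" unfolding power_mult[symmetric] by (simp add: algebra_simps)
  also have "(2 * s)^2 = (4 * s) * s" by (simp add: power2_eq_square)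
  also have "((4 * s) * s)^(n+1) = (4 * s)^(n+1) * s^(n+1)" by (rule power_mult_distrib)
  also have "(4 * s)^(n+1) \<le> (4 * s)^1" using s0 s_small by (intro power_decreasing) auto
  then have "(4 * s)^(n+1) * s^(n+1) \<le> (1/25) * s^(n+1)" using s_small sig_pos
    by (intro mult_right_mono) auto
  finally show ?thesis by simp
qed

lemma na: "i \<in> {1..n-1} \<Longrightarrow> norm (b i) = s^i" using nb by auto

lemma na_le: "i \<in> {1..n-1} \<Longrightarrow> norm (b i) \<le> s"
  using na[of i] s0 s_small power_decreasing[of 1 i s] by auto

lemma na_pos: "i \<in> {1..n-1} \<Longrightarrow> norm (b i) > 0" using na[of i] s0 by simp

context
  fixes i :: nat and z :: complex
  assumes i: "i \<in> {1..n-1}"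
    and hz1: "norm (b i) * (1 - 2 * s^(n+1)) \<le> norm z"
    and hz2: "norm z \<le> norm (b i) * (1 + 2 * s^(n+1))"
begin

lemma z_lo: "norm z \<ge> norm (b i) / 2"
proof -
  have "norm (b i) * (1/2) \<le> norm (b i) * (1 - 2 * s^(n+1))"
    using sig_small na_pos[OF i] by (intro mult_left_mono) auto
  then show ?thesis using hz1 by (simp add: field_simps) 
qed

lemma z_hi: "norm z \<le> 2 * norm (b i)"
proof -
  have "norm (b i) * (1 + 2 * s^(n+1)) \<le> norm (b i) * 2"
    using sig_small na_pos[OF i] by (intro mult_left_mono) auto
  then show ?thesis using hz2 by simp
qed

lemma z_nz: "z \<noteq> 0" using z_lo na_pos[OF i] by auto

lemma z_pow: "norm z ^ (n+1) \<le> (101/100) * s^(n+1)"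
proof -
  have "norm z \<le> s * (1 + 2 * s^(n+1))"
    by (rule order_trans[OF hz2 mult_right_mono[OF na_le[OF i]]]) (use sig_pos in simp)
  then have "norm z ^ (n+1) \<le> (s * (1 + 2 * s^(n+1)))^(n+1)" by (intro power_mono) auto
  also have "... = s^(n+1) * (1 + 2 * s^(n+1))^(n+1)" by (simp add: power_mult_distrib)
  also have "(1 + 2 * s^(n+1))^(n+1) \<le> 1 + 2 * real (n+1) * (2 * s^(n+1))"
  proof (rule pow_bern)
    show "0 \<le> 2 * s^(n+1)" using sig_pos by simp
    have "real (n+1) * (2 * s^(n+1)) \<le> (2 * real n) * (2 * s^(n+1))" using n2 sig_pos by (intro mult_right_mono) auto
    then have "real (n+1) * (2 * s^(n+1)) \<le> 4 * (real n * s^(n+1))" by simp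
    then show "real (n+1) * (2 * s^(n+1)) \<le> 1/2" using nsig by linarith
  qed
  also have "... \<le> 101/100"
  proof -
    have "real (n+1) * (2 * s^(n+1)) \<le> (2 * real n) * (2 * s^(n+1))" using n2 sig_pos by (intro mult_right_mono) auto
    then have "2 * real (n+1) * (2 * s^(n+1)) \<le> 8 * (real n * s^(n+1))" by linarith
    then show ?thesis using nsig by linarith
  qed
  finally have "(\<And>x y. x \<le> y \<Longrightarrow> s ^ (n + 1) * x \<le> s ^ (n + 1) * y) \<Longrightarrow>
      norm z ^ (n + 1) \<le> s ^ (n + 1) * (101 / 100)" .
  moreover have "\<And>x y. x \<le> y \<Longrightarrow> s ^ (n + 1) * x \<le> s ^ (n + 1) * y"
    using sig_pos by (intro mult_left_mono) auto
  ultimately show ?thesis by (simp add: mult.commute)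
qed

lemma den_nz: "of_nat n * z^(n+1) + 1 \<noteq> 0" and At_bound: "norm (At z) \<le> real n * real (n+1) * (26/25) * s^(n+1)"
proof -
  have w: "norm (of_nat n * z^(n+1)) \<le> 1/100"
  proof -
    have "norm (of_nat n * z^(n+1)) = real n * norm z ^ (n+1)" by (simp add: norm_mult norm_power)
    also have "... \<le> real n * ((101/100) * s^(n+1))" using z_pow by (intro mult_left_mono) auto
    also have "... = (101/100) * (real n * s^(n+1))" by simp
    also have "... \<le> 1/100" using nsig by linarith
    finally show ?thesis .
  qed
  have d: "norm (of_nat n * z^(n+1) + 1) \<ge> 99/100"
    using norm_triangle_ineq2[of 1 "- (of_nat n * z^(n+1))"] w by (simp add: add.commute)
  then show "of_nat n * z^(n+1) + 1 \<noteq> 0" by auto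
  have "norm (At z) = real n * real (n+1) * norm z ^ (n+1) / norm (of_nat n * z^(n+1) + 1)"
    unfolding At_def by (simp add: norm_mult norm_divide norm_power del: of_nat_Suc)
  also have "... \<le> real n * real (n+1) * ((101/100) * s^(n+1)) / (99/100)"
    using z_pow d s0 by (intro frac_le mult_left_mono) (auto intro!: mult_nonneg_nonneg)
  also have "... = (real n * real (n+1) * s^(n+1)) * (101/99)" by simp
  also have "... \<le> (real n * real (n+1) * s^(n+1)) * (26/25)"
    using s0 by (intro mult_left_mono) auto
  also have "... = real n * real (n+1) * (26/25) * s^(n+1)" by simp
  finally show "norm (At z) \<le> real n * real (n+1) * (26/25) * s^(n+1)" .
qed

lemma t_half: "(2 * s)^(2*n+2) \<le> 1/2"
  using t_bound sig_small by linarith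

lemma rk_bound:
  assumes k: "k \<in> {1..n-1}-{i}"
  shows "z^(2*n+2) \<noteq> b k ^ (2*n+2)"
    and "norm (rk i k z) \<le> of_nat (2*n+2) * (2 * (2 * s)^(2*n+2))"
proof -
  define t where "t = (2 * s)^(2*n+2)"
  define c where "c = b k ^ (2*n+2)"
  have t0: "0 \<le> t" "t \<le> 1/2" "t < 1" unfolding t_def using s0 t_half by auto
  have kk: "k \<in> {1..n-1}" "k \<noteq> i" using k by auto
  have bk: "norm (b k) > 0" using na_pos[OF kk(1)] .
  have cnz: "c \<noteq> 0" unfolding c_def using bk by auto
  have zN: "z^(2*n+2) \<noteq> 0" using z_nz by simp
  have "z^(2*n+2) \<noteq> c \<and> norm (rk i k z) \<le> of_nat (2*n+2) * (2 * t)"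
  proof (cases "k < i")
    case True
    have "s^i = s * s^(i-1)" using i by (metis Suc_diff_1 atLeastAtMost_iff less_le_trans power_Suc zero_less_one)
    also have "s^(i-1) \<le> s^k" using True s0 s_small by (intro power_decreasing) auto
    then have "s * s^(i-1) \<le> s * s^k" using s0 by (intro mult_left_mono) auto
    finally have "norm (b i) \<le> s * norm (b k)" using na[OF i] na[OF kk(1)] by simp
    then have zb: "norm z \<le> 2 * s * norm (b k)" using z_hi by linarith
    have "norm (z^(2*n+2)) \<le> (2 * s * norm (b k))^(2*n+2)"
      unfolding norm_power by (intro power_mono zb) auto
    also have "... = t * norm c" unfolding t_def c_def norm_power power_mult_distrib by (rule refl)
    finally have x: "norm (z^(2*n+2)) \<le> t * norm c" .
    have ne: "z^(2*n+2) \<noteq> c"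
    proof
      assume "z^(2*n+2) = c"
      then have "norm c \<le> t * norm c" using x by simp
      then show False using t0 cnz by (smt (verit) mult_le_cancel_right1 norm_ge_zero zero_less_norm_iff)
    qed
    have "norm (rk i k z) = of_nat (2*n+2) * norm (z^(2*n+2) / (c - z^(2*n+2)))"
    proof -
      have "rk i k z = (-1)^(k-1) * of_nat (2*n+2) * (- (z^(2*n+2) / (c - z^(2*n+2))))"
        unfolding rk_def tk_def c_def using True by (simp add: minus_divide_right)
      then show ?thesis by (simp only: norm_mult norm_minus_cancel norm_power norm_one norm_of_nat power_one; simp)
    qed
    also have "... \<le> of_nat (2*n+2) * (2 * t)"
      using ratio_bound[OF x t0(2,1)] by (intro mult_left_mono) auto
    finally show ?thesis using ne by simp
  next
    case False
    then have ki: "k \<ge> i + 1" using kk by auto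
    have "s^k \<le> s^(i+1)" using ki s0 s_small by (intro power_decreasing) auto
    then have "norm (b k) \<le> s * norm (b i)" using na[OF i] na[OF kk(1)] by simp
    also have "... \<le> s * (2 * norm z)" using z_lo s0 by (intro mult_left_mono) auto
    finally have zb: "norm (b k) \<le> 2 * s * norm z" by simp
    have "norm c \<le> (2 * s * norm z)^(2*n+2)"
      unfolding c_def norm_power by (intro power_mono zb) auto
    also have "... = t * norm (z^(2*n+2))" unfolding t_def norm_power power_mult_distrib by (rule refl)
    finally have x: "norm c \<le> t * norm (z^(2*n+2))" .
    have ne: "z^(2*n+2) \<noteq> c"
    proof
      assume "z^(2*n+2) = c"
      then have "norm c \<le> t * norm c" using x by simp
      then show False using t0 cnz by (smt (verit) mult_le_cancel_right1 norm_ge_zero zero_less_norm_iff)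
    qed
    have "norm (rk i k z) = of_nat (2*n+2) * norm (c / (z^(2*n+2) - c))"
    proof -
      have "rk i k z = (-1)^(k-1) * of_nat (2*n+2) * (c / (z^(2*n+2) - c))"
        unfolding rk_def tk_def c_def[symmetric] using False ne by (simp add: field_simps)
      then show ?thesis by (simp only: norm_mult norm_minus_cancel norm_power norm_one norm_of_nat power_one; simp)
    qed
    also have "... \<le> of_nat (2*n+2) * (2 * t)"
      using ratio_bound[OF x t0(2,1)] by (intro mult_left_mono) auto
    finally show ?thesis using ne by simp
  qed
  then show "z^(2*n+2) \<noteq> b k ^ (2*n+2)" "norm (rk i k z) \<le> of_nat (2*n+2) * (2 * (2 * s)^(2*n+2))"
    unfolding t_def c_def by auto
qed

lemma E_bound: "norm (Ef i z - 1/2) \<le> (3/5) * real n * s^(n+1)"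
proof -
  define K where "K = {1..n-1}-{i}"
  define t where "t = (2 * s)^(2*n+2)"
  have Npos: "real (2*n+2) > 0" by simp
  have "norm (Ef i z - 1/2) = norm (- At z + (\<Sum>k\<in>K. rk i k z)) / real (2*n+2)"
    unfolding E_decomp[OF i] K_def[symmetric] by (simp add: norm_mult norm_divide norm_power del: of_nat_Suc)
  also have "... \<le> (norm (At z) + (\<Sum>k\<in>K. norm (rk i k z))) / real (2*n+2)"
  proof (rule divide_right_mono)
    have "norm (- At z + (\<Sum>k\<in>K. rk i k z)) \<le> norm (At z) + norm (\<Sum>k\<in>K. rk i k z)"
      using norm_triangle_ineq[of "- At z"] by simp
    also have "norm (\<Sum>k\<in>K. rk i k z) \<le> (\<Sum>k\<in>K. norm (rk i k z))" by (rule norm_sum)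
    finally show "norm (- At z + (\<Sum>k\<in>K. rk i k z)) \<le> norm (At z) + (\<Sum>k\<in>K. norm (rk i k z))" by simp
  qed simp
  also have "... \<le> (real n * real (n+1) * (26/25) * s^(n+1) + real n * (real (2*n+2) * (2 * t))) / real (2*n+2)"
  proof (rule divide_right_mono)
    have "(\<Sum>k\<in>K. norm (rk i k z)) \<le> of_nat (card K) * (real (2*n+2) * (2 * t))"
      by (rule sum_bounded_above) (use rk_bound(2) in \<open>auto simp: K_def t_def\<close>)
    also have "... \<le> real n * (real (2*n+2) * (2 * t))"
    proof (rule mult_right_mono)
      have "card K \<le> card {1..n-1}" unfolding K_def by (rule card_mono) auto
      then show "real (card K) \<le> real n" by simp
      show "0 \<le> real (2*n+2) * (2 * t)" unfolding t_def using s0 by simp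
    qed
    finally show "norm (At z) + (\<Sum>k\<in>K. norm (rk i k z)) \<le> real n * real (n+1) * (26/25) * s^(n+1) + real n * (real (2*n+2) * (2 * t))"
      using At_bound by linarith
  qed simp
  also have "... = (13/25) * real n * s^(n+1) + real n * (2 * t)"
    by (simp add: field_simps)
  also have "... \<le> (13/25) * real n * s^(n+1) + real n * (2 * (s^(n+1) / 25))"
    using t_bound unfolding t_def by (intro add_left_mono mult_left_mono) auto
  also have "... = (3/5) * real n * s^(n+1)" by simp
  finally show ?thesis .
qed

end
end



lemma exp_minus_one_bound:
  fixes w :: complex
  assumes "norm w \<le> 1/20"
  shows "norm (exp w - 1) \<le> (11/10) * norm w"
proof -
  have "norm (exp w - (\<Sum>i\<le>0. w ^ i / fact i)) \<le> exp (norm w) * (norm w ^ Suc 0) / fact 0"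
    by (rule Taylor_exp_field)
  then have a: "norm (exp w - 1) \<le> exp (norm w) * norm w" by simp
  have "norm (exp (complex_of_real (norm w))) \<le> 1 + 2 * norm (complex_of_real (norm w))"
    by (rule exp_bound_lemma) (use assms in simp)
  then have "exp (norm w) \<le> 1 + 2 * norm w" by (simp add: exp_of_real[symmetric] del: exp_of_real)
  also have "... \<le> 11/10" using assms by simp
  finally have "exp (norm w) * norm w \<le> (11/10) * norm w" by (intro mult_right_mono) auto
  then show ?thesis using a by linarith
qed

lemma Ln_bound:
  fixes u :: complex
  assumes "norm u \<le> 1/20"
  shows "norm (Ln (1 + u)) \<le> (11/10) * norm u"
proof -
  have "norm (Ln (1 + u) - u) \<le> norm u ^ 2 / (1 - norm u)"
    by (rule Ln_approx_linear) (use assms in simp)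
  also have "... \<le> norm u * (1/10)"
  proof -
    have "norm u ^ 2 / (1 - norm u) = norm u * (norm u / (1 - norm u))" by (simp add: power2_eq_square)
    also have "norm u / (1 - norm u) \<le> 1/10" using assms by (simp add: field_simps)
    then have "norm u * (norm u / (1 - norm u)) \<le> norm u * (1/10)" by (intro mult_left_mono) auto
    finally show ?thesis .
  qed
  finally have "norm (Ln (1 + u) - u) \<le> norm u * (1/10)" .
  then show ?thesis using norm_triangle_ineq2[of "Ln (1+u)" u] by linarith
qed

context LL begin

definition om :: "nat \<Rightarrow> complex" where
  "om j = exp (complex_of_real pi * \<i> * (2 * of_nat j - 1) / of_nat (2*n+2))"

lemma om_alt: "j \<ge> 1 \<Longrightarrow> om j = exp (\<i> * of_real (pi * real (2*j-1) / real (2*n+2)))"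
  unfolding om_def by (simp add: of_nat_diff algebra_simps)

lemma norm_om: "j \<ge> 1 \<Longrightarrow> norm (om j) = 1"
  by (simp only: om_alt norm_exp_i_times)

lemma om_pow: "j \<ge> 1 \<Longrightarrow> om j ^ (2*n+2) = -1"
proof -
  assume j: "j \<ge> 1"
  have "om j ^ (2*n+2) = exp (of_nat (2*n+2) * (complex_of_real pi * \<i> * (2 * of_nat j - 1) / of_nat (2*n+2)))"
    unfolding om_def exp_of_nat_mult ..
  also have "of_nat (2*n+2) * (complex_of_real pi * \<i> * (2 * of_nat j - 1) / of_nat (2*n+2))
     = of_nat (2*j-1) * (complex_of_real pi * \<i>)"
    using j by (simp add: of_nat_diff del: of_nat_Suc)
  also have "exp ... = (-1)^(2*j-1)" unfolding exp_of_nat_mult by simp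
  also have "... = -1" using j by (simp add: odd_pos)
  finally show ?thesis .
qed

end



context LL begin

context
  fixes i j :: nat
  assumes i: "i \<in> {1..n-1}" and j: "j \<in> {1..2*n+2}"
begin

definition wt where "wt = b i * om j"
definition rho where "rho = 2 * s^(n+1) * norm (b i)"
definition qf where "qf z = Ef i z / (1 - Ef i z)"
definition Fm where "Fm z = wt * exp (Ln (qf z) / of_nat (2*n+2))"

lemma wt_eq: "wt = b i * om j" unfolding wt_def ..
lemma rho_eq: "rho = 2 * s^(n+1) * norm (b i)" unfolding rho_def ..

lemma norm_wt: "norm wt = norm (b i)"
  unfolding wt_def using norm_om j by (simp add: norm_mult)

lemma inS:
  assumes "z \<in> cball wt rho"
  shows "norm (b i) * (1 - 2 * s^(n+1)) \<le> norm z" "norm z \<le> norm (b i) * (1 + 2 * s^(n+1))"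
proof -
  have d: "norm (z - wt) \<le> rho" using assms by (simp add: dist_norm norm_minus_commute)
  show "norm (b i) * (1 - 2 * s^(n+1)) \<le> norm z"
    using d norm_triangle_ineq2[of wt z] norm_wt unfolding rho_def
    by (simp add: algebra_simps norm_minus_commute)
  show "norm z \<le> norm (b i) * (1 + 2 * s^(n+1))"
    using d norm_triangle_ineq[of "z - wt" wt] norm_wt unfolding rho_def
    by (simp add: algebra_simps)
qed

lemma q_bound:
  assumes "z \<in> cball wt rho"
  shows "Ef i z \<noteq> 1" "norm (qf z - 1) \<le> 3 * real n * s^(n+1)"
proof -
  define E where "E = Ef i z"
  have eb: "norm (E - 1/2) \<le> (3/5) * real n * s^(n+1)"
    unfolding E_def using E_bound[OF i inS[OF assms]] .
  have small: "(3/5) * real n * s^(n+1) \<le> 1/10" using nsig by linarith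
  have "norm (1 - E) \<ge> 1/2 - norm (E - 1/2)"
    using norm_triangle_ineq2[of "1/2" "E - 1/2"] by (simp add: norm_minus_commute)
  then have d: "norm (1 - E) \<ge> 2/5" using eb small by linarith
  then show "Ef i z \<noteq> 1" unfolding E_def[symmetric] by auto
  have ne: "1 - E \<noteq> 0" using d by auto
  then have ne1: "E \<noteq> 1" by auto
  have "E / (1 - E) - 1 = (E - (1 - E)) / (1 - E)" by (subst diff_divide_distrib) (simp add: divide_self[OF ne] ne1)
  also have "E - (1 - E) = 2 * (E - 1/2)" by simp
  finally have "qf z - 1 = 2 * (E - 1/2) / (1 - E)" unfolding qf_def E_def[symmetric] .
  then have "norm (qf z - 1) = 2 * norm (E - 1/2) / norm (1 - E)" by (simp only: norm_mult norm_divide norm_numeral)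
  also have "... \<le> 2 * ((3/5) * real n * s^(n+1)) / (2/5)"
    using eb d sig_pos by (intro frac_le mult_left_mono) auto
  also have "... = 3 * real n * s^(n+1)" by simp
  finally show "norm (qf z - 1) \<le> 3 * real n * s^(n+1)" .
qed

lemma q_pos:
  assumes "z \<in> cball wt rho"
  shows "qf z \<notin> \<real>\<^sub>\<le>\<^sub>0" "qf z \<noteq> 0"
proof -
  have "norm (qf z - 1) \<le> 1/10" using q_bound(2)[OF assms] nsig by linarith
  then have "\<bar>Re (qf z - 1)\<bar> \<le> 1/10" using abs_Re_le_cmod[of "qf z - 1"] by linarith
  then have "- Re (qf z - 1) \<le> 1/10" by (rule abs_le_D2)
  then have "Re (qf z) \<ge> 9/10" by simp
  then have "Re (qf z) > 0" by simp
  then show "qf z \<notin> \<real>\<^sub>\<le>\<^sub>0" "qf z \<noteq> 0" by (auto simp: complex_nonpos_Reals_iff)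
qed

lemma F_bound:
  assumes "z \<in> cball wt rho"
  shows "norm (Fm z - wt) \<le> (363/200) * s^(n+1) * norm (b i)"
proof -
  define u where "u = qf z - 1"
  have ub: "norm u \<le> 3 * real n * s^(n+1)" unfolding u_def using q_bound(2)[OF assms] .
  have u20: "norm u \<le> 1/20" using ub nsig by linarith
  have lb: "norm (Ln (qf z)) \<le> (11/10) * (3 * real n * s^(n+1))"
    using Ln_bound[OF u20] ub unfolding u_def by simp
  define w where "w = Ln (qf z) / of_nat (2*n+2)"
  have "norm w = norm (Ln (qf z)) / real (2*n+2)" unfolding w_def by (simp add: norm_divide del: of_nat_Suc)
  also have "... \<le> (11/10) * (3 * real n * s^(n+1)) / real (2*n+2)"
    using lb by (intro divide_right_mono) auto
  also have "... \<le> (33/20) * s^(n+1)"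
  proof -
    have h: "real n * s^(n+1) / real (2*n+2) \<le> s^(n+1) / 2" using sig_pos by (simp add: field_simps)
    have "(11/10) * (3 * real n * s^(n+1)) / real (2*n+2) = (33/10) * (real n * s^(n+1) / real (2*n+2))"
      by simp
    also have "... \<le> (33/10) * (s^(n+1) / 2)" using h by (intro mult_left_mono) auto
    finally show ?thesis by simp
  qed
  finally have wb: "norm w \<le> (33/20) * s^(n+1)" .
  then have w20: "norm w \<le> 1/20" using sig_small by linarith
  have "Fm z - wt = wt * (exp w - 1)" unfolding Fm_def w_def by (simp add: algebra_simps)
  then have "norm (Fm z - wt) = norm (b i) * norm (exp w - 1)" using norm_wt by (simp add: norm_mult)
  also have "... \<le> norm (b i) * ((11/10) * ((33/20) * s^(n+1)))"
    using exp_minus_one_bound[OF w20] wb by (intro mult_left_mono) auto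
  also have "... = (363/200) * s^(n+1) * norm (b i)" by simp
  finally show ?thesis .
qed

lemma F_maps: "Fm \<in> cball wt rho \<rightarrow> cball wt rho"
proof
  fix z assume z: "z \<in> cball wt rho"
  have "norm (Fm z - wt) \<le> rho"
  proof -
    have "(363/200) * s^(n+1) * norm (b i) \<le> (2 * s^(n+1)) * norm (b i)"
      using na_pos[OF i] sig_pos by (intro mult_right_mono) auto
    then show ?thesis using F_bound[OF z] unfolding rho_def by linarith
  qed
  then show "Fm z \<in> cball wt rho" by (simp add: dist_norm norm_minus_commute)
qed

lemma F_cont: "continuous_on (cball wt rho) Fm"
proof -
  define S where "S = cball wt rho"
  have den: "\<And>z. z \<in> S \<Longrightarrow> of_nat n * z^(n+1) + 1 \<noteq> 0"
    unfolding S_def using den_nz[OF i inS] by blast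
  have tkd: "\<And>z k. z \<in> S \<Longrightarrow> k \<in> {1..n-1}-{i} \<Longrightarrow> z^(2*n+2) - b k ^ (2*n+2) \<noteq> 0"
    unfolding S_def using rk_bound(1)[OF i inS] by fastforce
  have cAt: "continuous_on S At"
    unfolding At_def by (intro continuous_intros) (use den in auto)
  have ctk: "continuous_on S (tk k)" if "k \<in> {1..n-1}-{i}" for k
    unfolding tk_def by (intro continuous_intros) (use tkd that in auto)
  have N0: "(of_nat (2*n+2)::complex) \<noteq> 0" by (simp only: of_nat_eq_0_iff)
  have cE: "continuous_on S (Ef i)"
    unfolding Ef_def gf_def by (intro continuous_intros cAt ctk) (use N0 in auto)
  have cq: "continuous_on S qf"
    unfolding qf_def using q_bound(1) unfolding S_def[symmetric]
    by (intro continuous_intros cE) auto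
  have "continuous_on S Fm"
    unfolding Fm_def by (intro continuous_intros cq) (use q_pos(1) S_def N0 in auto)
  then show ?thesis unfolding S_def .
qed

lemma fixpt: "\<exists>z\<in>cball wt rho. Fm z = z"
proof -
  have "rho \<ge> 0" unfolding rho_def using s0 by simp
  then have ne: "cball wt rho \<noteq> {}" by simp
  obtain z where "z \<in> cball wt rho" "Fm z = z"
    by (rule brouwer[OF compact_cball convex_cball ne F_cont F_maps])
  then show ?thesis by blast
qed

lemma crit:
  assumes z: "z \<in> cball wt rho" and fz: "Fm z = z"
  shows "z^(2*n+2) \<noteq> b i ^ (2*n+2)" "lam n b z = 0"
proof -
  define E where "E = Ef i z"
  define c where "c = b i ^ (2*n+2)"
  define N where "N = (of_nat (2*n+2) :: complex)"
  have N0: "N \<noteq> 0" unfolding N_def by (simp only: of_nat_eq_0_iff)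
  have E1: "E \<noteq> 1" unfolding E_def using q_bound(1)[OF z] .
  have ne: "1 - E \<noteq> 0" using E1 by auto
  have c0: "c \<noteq> 0" unfolding c_def using na_pos[OF i] by auto
  have q0: "qf z \<noteq> 0" using q_pos(2)[OF z] .
  have "z^(2*n+2) = wt^(2*n+2) * exp (Ln (qf z) / of_nat (2*n+2)) ^ (2*n+2)"
    using fz unfolding Fm_def by (metis power_mult_distrib)
  also have "exp (Ln (qf z) / of_nat (2*n+2)) ^ (2*n+2) = exp (of_nat (2*n+2) * (Ln (qf z) / of_nat (2*n+2)))"
    by (rule exp_of_nat_mult[symmetric])
  also have "of_nat (2*n+2) * (Ln (qf z) / of_nat (2*n+2)) = Ln (qf z)"
    using N0 unfolding N_def by simp
  also have "exp (Ln (qf z)) = qf z" using q0 by simp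
  also have "wt^(2*n+2) = - c" unfolding wt_def c_def power_mult_distrib using om_pow j by simp
  finally have zN: "z^(2*n+2) = - c * (E / (1 - E))" unfolding qf_def E_def .
  have d: "z^(2*n+2) - c = - c / (1 - E)" unfolding zN using ne by (simp add: field_simps)
  then show "z^(2*n+2) \<noteq> b i ^ (2*n+2)" using c0 ne unfolding c_def[symmetric] by auto
  have "tk i z = (-1)^(i-1) * N * (z^(2*n+2) / (z^(2*n+2) - c))"
    unfolding tk_def N_def c_def by simp
  also have "z^(2*n+2) / (z^(2*n+2) - c) = E" unfolding d unfolding zN using ne c0 by (simp add: field_simps)
  finally have t: "tk i z = (-1)^(i-1) * N * E" .
  have "E = (-1)^i * gf i z / N" unfolding E_def Ef_def N_def ..
  then have e2: "E * N = (-1)^i * gf i z" using N0 by (simp add: field_simps)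
  have sq: "(-1::complex)^i * (-1)^i = 1" by (simp add: power_add[symmetric])
  have "gf i z = ((-1)^i * (-1)^i) * gf i z" unfolding sq by simp
  also have "... = (-1)^i * (E * N)" unfolding e2 by (simp add: mult.assoc)
  finally have g: "gf i z = (-1)^i * N * E" by (simp add: algebra_simps)
  have "(-1::complex)^i = - ((-1)^(i-1))" using i
    by (metis Suc_diff_1 atLeastAtMost_iff less_le_trans mult_minus1 power_Suc zero_less_one)
  then show "lam n b z = 0" unfolding lam_split[OF i] t g by simp
qed

end
end



context LL begin

lemma c_le: "k \<in> {1..n-1} \<Longrightarrow> norm (b k ^ (2*n+2)) \<le> s"
proof -
  assume k: "k \<in> {1..n-1}"
  have "norm (b k ^ (2*n+2)) = norm (b k) ^ (2*n+2)" by (rule norm_power)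
  also have "... \<le> norm (b k) ^ 1" using na_pos[OF k] na_le[OF k] s_small
    by (intro power_decreasing) auto
  finally show ?thesis using na_le[OF k] by simp
qed

lemma A_nz: "A_n n b \<noteq> 0"
proof -
  define c where "c k = b k ^ (2*n+2)" for k
  have c1: "1 - c k \<noteq> 0" if "k \<in> {1..n-1}" for k
    using c_le[OF that] s_small unfolding c_def by (auto simp: norm_one)
  have tb: "norm ((-1)^(k-1) * c k / (1 - c k)) \<le> 2 * s" if k: "k \<in> {1..n-1}" for k
  proof -
    have "norm ((-1)^(k-1) * c k / (1 - c k)) = norm (c k / (1 - c k))"
      by (simp add: norm_mult norm_divide norm_power)
    also have "... \<le> 2 * norm (c k)"
      by (rule ratio_bound) (use c_le[OF k] s_small in \<open>auto simp: c_def\<close>)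
    also have "... \<le> 2 * s" using c_le[OF k] unfolding c_def by simp
    finally show ?thesis .
  qed
  have "norm (C_n n b) \<le> (\<Sum>k=1..n-1. norm ((-1)^(k-1) * c k / (1 - c k)))"
    unfolding C_n_def c_def by (rule norm_sum)
  also have "... \<le> of_nat (card {1..n-1}) * (2 * s)" by (rule sum_bounded_above) (use tb in auto)
  also have "... \<le> real n * (2 * s)" using s0 by (intro mult_right_mono) auto
  finally have Cb: "norm (C_n n b) \<le> real n * (2 * s)" .
  have "norm (of_nat (2*n+2) * C_n n b) = real (2*n+2) * norm (C_n n b)" by (simp add: norm_mult del: of_nat_Suc)
  also have "... \<le> real (3*n) * (real n * (2 * s))" using Cb n2 by (intro mult_mono) auto
  also have "... = 6 * (real n ^ 2 * s)" by (simp add: power2_eq_square)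
  also have "real n ^ 2 * s \<le> 1/25"
  proof -
    have np: "real n ^ 2 > 0" using n2 by simp
    have "real n ^ 2 * s \<le> real n ^ 2 * (1 / (25 * real n ^ 2))" using s1 np by (intro mult_left_mono) auto
    also have "... = 1/25" using np by simp
    finally show ?thesis .
  qed
  finally have "norm (of_nat (2*n+2) * C_n n b) < 1" by simp
  then have d: "1 + of_nat (2*n+2) * C_n n b \<noteq> 0"
    by (metis add.inverse_unique norm_minus_cancel norm_one order_less_irrefl)
  have p: "(\<Prod>i=1..n-1. (1 - b i ^ (2*n+2)) powi ((-1)^i)) \<noteq> 0"
    using c1 unfolding c_def by (auto simp: prod_zero_iff)
  show ?thesis unfolding A_n_def using d p by simp
qed

lemma PB_nz:
  assumes "z \<noteq> 0" "of_nat n * z^(n+1) + 1 \<noteq> 0" "\<forall>k\<in>{1..n-1}. z^(2*n+2) \<noteq> b k ^ (2*n+2)"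
  shows "P_n n b z \<noteq> B_n n b"
proof -
  have p: "(\<Prod>i=1..n-1. (z^(2*n+2) - b i ^ (2*n+2)) powi ((-1)^(i-1))) \<noteq> 0"
    using assms(3) by (auto simp: prod_zero_iff)
  have "A_n n b * (of_nat (n+1) * z powi ((-1)^(n+1) * int (n+1)) / (of_nat n * z^(n+1) + 1))
      * (\<Prod>i=1..n-1. (z^(2*n+2) - b i ^ (2*n+2)) powi ((-1)^(i-1))) \<noteq> 0"
    using A_nz p assms(1,2) by (simp del: of_nat_Suc)
  then show ?thesis unfolding P_n_def by simp
qed

end



lemma pow_sub_one:
  fixes \<zeta> :: complex
  assumes "norm \<zeta> = 1"
  shows "norm (\<zeta>^m - 1) \<le> real m * norm (\<zeta> - 1)"
proof (induction m)
  case 0 then show ?case by simp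
next
  case (Suc m)
  have "\<zeta>^Suc m - 1 = \<zeta> * (\<zeta>^m - 1) + (\<zeta> - 1)" by (simp add: algebra_simps)
  then have "norm (\<zeta>^Suc m - 1) \<le> norm (\<zeta> * (\<zeta>^m - 1)) + norm (\<zeta> - 1)"
    by (metis norm_triangle_ineq)
  also have "norm (\<zeta> * (\<zeta>^m - 1)) = norm (\<zeta>^m - 1)" using assms by (simp add: norm_mult)
  finally show ?case using Suc.IH by (simp add: algebra_simps)
qed

lemma root_unity_sep:
  fixes \<zeta> :: complex
  assumes "\<zeta>^N = 1" "\<zeta> \<noteq> 1" "norm \<zeta> = 1" "N > 0"
  shows "1 \<le> real N * norm (\<zeta> - 1)"
proof -
  have g: "(\<Sum>m<N. \<zeta>^m) = 0" using geometric_sum[OF assms(2), of N] assms(1) by simp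
  have "of_nat N = (\<Sum>m<N. (1 - \<zeta>^m))" using g by (simp add: sum_subtractf)
  then have "real N = norm (\<Sum>m<N. (1 - \<zeta>^m))" by (metis norm_of_nat)
  also have "... \<le> (\<Sum>m<N. norm (1 - \<zeta>^m))" by (rule norm_sum)
  also have "... \<le> of_nat (card {..<N}) * (real N * norm (\<zeta> - 1))"
  proof (rule sum_bounded_above)
    fix m assume "m \<in> {..<N}"
    then have "real m \<le> real N" by simp
    then have "real m * norm (\<zeta> - 1) \<le> real N * norm (\<zeta> - 1)" by (intro mult_right_mono) auto
    then show "norm (1 - \<zeta>^m) \<le> real N * norm (\<zeta> - 1)"
      using pow_sub_one[OF assms(3), of m] by (simp add: norm_minus_commute)
  qed
  finally have "real N * 1 \<le> real N * (real N * norm (\<zeta> - 1))" by simp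
  then show ?thesis using assms(4) by (simp only: mult_le_cancel_left_pos of_nat_0_less_iff)
qed

context LL begin

lemma om_inj:
  assumes "j1 \<in> {1..2*n+2}" "j2 \<in> {1..2*n+2}" "om j1 = om j2"
  shows "j1 = j2"
proof -
  define x where "x j = \<i> * of_real (pi * real (2*j-1) / real (2*n+2))" for j
  have "exp (x j1 - x j2) = 1" using assms om_alt unfolding x_def by (simp add: exp_diff)
  then obtain m :: int where m: "Im (x j1 - x j2) = of_int (2 * m) * pi" unfolding exp_eq_1 by blast
  have "Im (x j1 - x j2) = pi * (real (2*j1-1) - real (2*j2-1)) / real (2*n+2)"
    unfolding x_def by (simp add: diff_divide_distrib right_diff_distrib)
  also have "real (2*j1-1) - real (2*j2-1) = 2 * (real j1 - real j2)" using assms by (simp add: of_nat_diff)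
  finally have "pi * (2 * (real j1 - real j2)) / real (2*n+2) = of_int (2 * m) * pi" using m by simp
  then have "pi * (2 * (real j1 - real j2)) = pi * (2 * (of_int m * real (2*n+2)))"
    by (simp add: field_simps del: of_nat_Suc)
  then have "2 * (real j1 - real j2) = 2 * (of_int m * real (2*n+2))"
    using mult_left_cancel[OF pi_neq_zero] by blast
  then have "real j1 - real j2 = of_int m * real (2*n+2)" by simp
  then have "real_of_int (int j1 - int j2) = real_of_int (m * int (2*n+2))" by simp
  then have e: "int j1 - int j2 = m * int (2*n+2)" by (simp only: of_int_eq_iff)
  have "\<bar>int j1 - int j2\<bar> < int (2*n+2)" using assms by auto
  then have h0: "\<bar>m * int (2*n+2)\<bar> < int (2*n+2)" unfolding e .
  have h: "\<bar>m\<bar> * int (2*n+2) < int (2*n+2)" using h0 by (simp only: abs_mult abs_of_nat)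
  have "\<bar>m\<bar> < 1"
  proof (rule ccontr)
    assume "\<not> \<bar>m\<bar> < 1"
    then have "1 \<le> \<bar>m\<bar>" by simp
    then have "1 * int (2*n+2) \<le> \<bar>m\<bar> * int (2*n+2)" by (rule mult_right_mono) simp
    then show False using h by simp
  qed
  then have "m = 0" by simp
  then show ?thesis using e by simp
qed

lemma sep_i:
  assumes i1: "i1 \<in> {1..n-1}" and i2: "i2 \<in> {1..n-1}" and j1: "j1 \<in> {1..2*n+2}" and j2: "j2 \<in> {1..2*n+2}"
    and z1: "z \<in> cball (wt i1 j1) (rho i1)" and z2: "z \<in> cball (wt i2 j2) (rho i2)" and lt: "i1 < i2"
  shows False
proof -
  have a: "norm z \<ge> norm (b i1) / 2" using z_lo[OF i1 inS[OF i1 j1 z1]] .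
  have c: "norm z \<le> 2 * norm (b i2)" using z_hi[OF i2 inS[OF i2 j2 z2]] .
  have "s^i2 \<le> s^(i1+1)" using lt s0 s_small by (intro power_decreasing) auto
  then have "norm (b i2) \<le> s * norm (b i1)" using na[OF i1] na[OF i2] by simp
  then have "norm (b i1) / 2 \<le> 2 * s * norm (b i1)" using a c by linarith
  moreover have "2 * s * norm (b i1) \<le> (1/50) * norm (b i1)"
    using s_small na_pos[OF i1] by (intro mult_right_mono) auto
  ultimately show False using na_pos[OF i1] by linarith
qed

lemma sep_j:
  assumes i: "i \<in> {1..n-1}" and j1: "j1 \<in> {1..2*n+2}" and j2: "j2 \<in> {1..2*n+2}"
    and z1: "z \<in> cball (wt i j1) (rho i)" and z2: "z \<in> cball (wt i j2) (rho i)"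
  shows "j1 = j2"
proof (rule om_inj[OF j1 j2], rule ccontr)
  assume ne: "om j1 \<noteq> om j2"
  have o1: "norm (om j1) = 1" "norm (om j2) = 1" using norm_om j1 j2 by auto
  then have o0: "om j2 \<noteq> 0" by auto
  have "norm (wt i j1 - wt i j2) \<le> norm (wt i j1 - z) + norm (z - wt i j2)" using norm_triangle_ineq[of "wt i j1 - z" "z - wt i j2"] by simp
  also have "... \<le> rho i + rho i" using z1 z2 by (intro add_mono) (auto simp: dist_norm norm_minus_commute)
  finally have h: "norm (wt i j1 - wt i j2) \<le> rho i + rho i" .
  have eq: "wt i j1 - wt i j2 = b i * (om j1 - om j2)" by (simp add: wt_eq[OF i j1] wt_eq[OF i j2] right_diff_distrib)
  have "norm (b i) * norm (om j1 - om j2) \<le> norm (b i) * (4 * s^(n+1))"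
    using h norm_mult[of "b i" "om j1 - om j2"] unfolding eq rho_eq[OF i j1] by (simp only: algebra_simps)
  then have d: "norm (om j1 - om j2) \<le> 4 * s^(n+1)" using na_pos[OF i] by simp
  define \<zeta> where "\<zeta> = om j1 / om j2"
  have "\<zeta>^(2*n+2) = 1" unfolding \<zeta>_def power_divide using om_pow j1 j2 by simp
  moreover have "\<zeta> \<noteq> 1" unfolding \<zeta>_def using ne o0 by simp
  moreover have "norm \<zeta> = 1" unfolding \<zeta>_def using o1 by (simp add: norm_divide)
  ultimately have r: "1 \<le> real (2*n+2) * norm (\<zeta> - 1)" by (intro root_unity_sep) auto
  have "\<zeta> - 1 = (om j1 - om j2) / om j2" unfolding \<zeta>_def using o0 by (simp add: field_simps)
  then have "norm (\<zeta> - 1) = norm (om j1 - om j2)" using o1 by (simp add: norm_divide)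
  then have "1 \<le> real (2*n+2) * (4 * s^(n+1))" using r d by (smt (verit) mult_left_mono of_nat_0_le_iff)
  also have "... \<le> (3 * real n) * (4 * s^(n+1))" using n2 sig_pos by (intro mult_right_mono) auto
  also have "... = 12 * (real n * s^(n+1))" by simp
  finally show False using nsig by linarith
qed

end



lemma powr_bound:
  fixes s :: real
  assumes "0 < s" "s \<le> 1/100"
  shows "2 * s^(n+1) < s powr (real n + 1/2)"
proof -
  have "s powr (real n + 1/2) = s powr real n * s powr (1/2)" using assms by (simp add: powr_add)
  also have "... = s^n * sqrt s" using assms by (simp add: powr_realpow powr_half_sqrt)
  finally have e: "s powr (real n + 1/2) = s^n * sqrt s" .
  have sq: "sqrt s \<le> 1/10" using assms real_sqrt_le_mono[of s "1/100"] by (simp add: real_sqrt_divide)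
  have sp: "sqrt s > 0" using assms by simp
  have "2 * s = 2 * sqrt s * sqrt s" using assms by simp
  also have "... \<le> 2 * (1/10) * sqrt s" using sq sp by (intro mult_right_mono) auto
  also have "... < sqrt s" using sp by simp
  finally have "2 * s < sqrt s" .
  then have "s^n * (2 * s) < s^n * sqrt s" using assms by (intro mult_strict_left_mono) auto
  then show ?thesis unfolding e by (simp add: algebra_simps)
qed

theorem lemma5p4:
  fixes n :: nat and s :: real and b :: "nat \<Rightarrow> complex"
  assumes "n \<ge> 2" and "0 < s" and "s \<le> 1 / (25 * real n ^ 2)"
    and "\<forall>i\<in>{1..n-1}. norm (b i) = s ^ i"
  shows "\<exists>w :: nat \<Rightarrow> nat \<Rightarrow> complex.
     (\<forall>i\<in>{1..n-1}. \<forall>j\<in>{1..2*n+2}.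
        is_crit_P n b (w i j) \<and>
        norm (w i j - b i * exp (complex_of_real pi * \<i> * (2 * of_nat j - 1) / of_nat (2*n+2)))
          < s powr (real n + 1/2) * norm (b i)) \<and>
     (\<forall>i1\<in>{1..n-1}. \<forall>j1\<in>{1..2*n+2}. \<forall>i2\<in>{1..n-1}. \<forall>j2\<in>{1..2*n+2}.
        w i1 j1 = w i2 j2 \<longleftrightarrow> (i1, j1) = (i2, j2))"
proof -
  interpret L: LL n s b using assms by unfold_locales auto
  define w where "w i j = (SOME z. z \<in> cball (L.wt i j) (L.rho i) \<and> L.Fm i j z = z)" for i j
  have W: "w i j \<in> cball (L.wt i j) (L.rho i) \<and> L.Fm i j (w i j) = w i j"
    if i: "i \<in> {1..n-1}" and j: "j \<in> {1..2*n+2}" for i j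
    unfolding w_def by (rule someI_ex) (use L.fixpt[OF i j] in blast)
  show ?thesis
  proof (intro exI conjI ballI)
    fix i j assume i: "i \<in> {1..n-1}" and j: "j \<in> {1..2*n+2}"
    define z where "z = w i j"
    have zS: "z \<in> cball (L.wt i j) (L.rho i)" and fz: "L.Fm i j z = z" using W[OF i j] unfolding z_def by auto
    note hz = L.inS[OF i j zS]
    have z0: "z \<noteq> 0" using L.z_nz[OF i hz] .
    have d0: "of_nat n * z^(n+1) + 1 \<noteq> 0" using L.den_nz[OF i hz] .
    have ck: "\<forall>k\<in>{1..n-1}. z^(2*n+2) \<noteq> b k ^ (2*n+2)"
    proof
      fix k assume k: "k \<in> {1..n-1}"
      show "z^(2*n+2) \<noteq> b k ^ (2*n+2)"
      proof (cases "k = i")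
        case True then show ?thesis using L.crit(1)[OF i j zS fz] by simp
      next
        case False then show ?thesis using L.rk_bound(1)[OF i hz, of k] k by auto
      qed
    qed
    have pb: "P_n n b z \<noteq> B_n n b" using L.PB_nz[OF z0 d0 ck] .
    have "(P_n n b has_field_derivative (P_n n b z - B_n n b) * (lam n b z / z)) (at z)"
      using P_deriv[OF z0 d0 ck] .
    then have der: "(P_n n b has_field_derivative 0) (at z)" using L.crit(2)[OF i j zS fz] by simp
    show "is_crit_P n b (w i j)" unfolding is_crit_P_def z_def[symmetric] using z0 d0 ck pb der by blast
    have e: "b i * exp (complex_of_real pi * \<i> * (2 * of_nat j - 1) / of_nat (2*n+2)) = L.wt i j"
      using L.wt_eq[OF i j] unfolding L.om_def by simp
    have "norm (z - L.wt i j) \<le> L.rho i" using zS by (simp add: dist_norm norm_minus_commute)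
    also have "L.rho i = 2 * s^(n+1) * norm (b i)" using L.rho_eq[OF i j] .
    also have "... < s powr (real n + 1/2) * norm (b i)"
      using powr_bound[OF assms(2) L.s_small] L.na_pos[OF i] by (intro mult_strict_right_mono) auto
    finally show "norm (w i j - b i * exp (complex_of_real pi * \<i> * (2 * of_nat j - 1) / of_nat (2*n+2)))
          < s powr (real n + 1/2) * norm (b i)" unfolding e z_def .
  next
    fix i1 j1 i2 j2 assume i1: "i1 \<in> {1..n-1}" and j1: "j1 \<in> {1..2*n+2}"
      and i2: "i2 \<in> {1..n-1}" and j2: "j2 \<in> {1..2*n+2}"
    show "w i1 j1 = w i2 j2 \<longleftrightarrow> (i1, j1) = (i2, j2)"
    proof
      assume eq: "w i1 j1 = w i2 j2"
      have z1: "w i1 j1 \<in> cball (L.wt i1 j1) (L.rho i1)" using W[OF i1 j1] by auto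
      have z2: "w i1 j1 \<in> cball (L.wt i2 j2) (L.rho i2)" using W[OF i2 j2] eq by auto
      have "i1 = i2"
      proof (rule ccontr)
        assume "i1 \<noteq> i2"
        then consider "i1 < i2" | "i2 < i1" by linarith
        then show False
        proof cases
          case 1 then show False using L.sep_i[OF i1 i2 j1 j2 z1 z2] by blast
        next
          case 2 then show False using L.sep_i[OF i2 i1 j2 j1 z2 z1] by blast
        qed
      qed
      moreover have "j1 = j2" using L.sep_j[OF i1 j1 j2 z1] z2 \<open>i1 = i2\<close> by simp
      ultimately show "(i1, j1) = (i2, j2)" by simp
    qed simp
  qed
qed


end
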